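(* In the privacy game, let $(\alpha^0,\beta^0)\in A\times B$ be arbitrary and let $\{(\alpha^k,\beta^k)\}_{k\in\mathbb{N}}$ be generated by the following best-response dynamics: for $k=1,2,\dots$, if $k$ is even, choose $\alpha^k\in\arg\min_{\alpha\in A}U(\alpha,\beta^{k-1})$ and set $\beta^k=\beta^{k-1}$; if $k$ is odd, choose $\beta^k\in\arg\min_{\beta\in B}V(\alpha^{k-1},\beta)$ and set $\alpha^k=\alpha^{k-1}$. Then for every $\epsilon>0$ there exists $K_\epsilon\in\mathbb{N}$ such that $(\alpha^k,\beta^k)\in\mathcal{N}_\epsilon$ for all $k\ge K_\epsilon$, where $\mathcal{N}_\epsilon=\{(\alpha,\beta)\in A\times B: U(\alpha,\beta)\le U(\alpha',\beta)+\epsilon\ \forall\alpha'\in A,\ V(\alpha,\beta)\le V(\alpha,\beta')+\epsilon\ \forall\beta'\in B\}$ is the set of $\epsilon$-Nash equilibria.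
   Context: Privacy game. $\mathcal{X},\mathcal{W},\mathcal{Y}$ are finite nonempty sets; $p$ is a joint probability mass function of $(X,Z,W)$ on $\mathcal{X}\times\mathcal{X}\times\mathcal{W}$; $d:\mathcal{X}\times\mathcal{X}\to\mathbb{R}_{\ge 0}$; $\varrho$ is a real constant (privacy ratio). Sender policies: $A=\{\alpha=(\alpha_{yzw}):\alpha_{yzw}\in[0,1],\ \sum_{y\in\mathcal{Y}}\alpha_{yzw}=1\ \forall (z,w)\in\mathcal{X}\times\mathcal{W}\}$, with $\alpha_{yzw}=\mathbb{P}\{Y=y\mid Z=z,W=w\}$. Receiver policies: $B=\{\beta=(\beta_{\hat x y}):\beta_{\hat x y}\in[0,1],\ \sum_{\hat x\in\mathcal{X}}\beta_{\hat x y}=1\ \forall y\in\mathcal{Y}\}$, with $\beta_{\hat x y}=\mathbb{P}\{\hat X=\hat x\mid Y=y\}$. Define $\xi(\alpha,\beta)=\sum_{x,\hat x\in\mathcal{X}}\sum_{y\in\mathcal{Y}}\sum_{z\in\mathcal{X}}\sum_{w\in\mathcal{W}}d(x,\hat x)\beta_{\hat x y}\alpha_{yzw}p(x,z,w)$ (the expected distortion $\mathbb{E}\{d(X,\hat X)\}$) and $\zeta(\alpha)=\sum_{y,w}P_{yw}\log\frac{P_{yw}}{P_y P_w}$ (with $0\log 0=0$), where $P_{yw}=\sum_{z,x}\alpha_{yzw}p(x,z,w)$, $P_y=\sum_{w}P_{yw}$, $P_w=\sum_{z,x}p(x,z,w)$ (the mutual information $I(Y;W)$). Sender cost $U(\alpha,\beta)=\xi(\alpha,\beta)+\varrho\zeta(\alpha)$;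 receiver cost $V(\alpha,\beta)=\xi(\alpha,\beta)$. *)

theory Defs
  imports Complex_Main
begin

text \<open>Finite sets X, W, Y are modelled by finite types 'x, 'w, 'y.
  Sender policy alpha y z w = P(Y=y | Z=z, W=w); receiver policy beta xh y = P(Xhat=xh | Y=y);
  p x z w is the joint pmf of (X,Z,W).\<close>

definition sender_policies :: "('y::finite \<Rightarrow> 'x::finite \<Rightarrow> 'w::finite \<Rightarrow> real) set" where
  "sender_policies = {\<alpha>. (\<forall>y z w. 0 \<le> \<alpha> y z w \<and> \<alpha> y z w \<le> 1) \<and>
                          (\<forall>z w. (\<Sum>y\<in>UNIV. \<alpha> y z w) = 1)}"

definition receiver_policies :: "('x::finite \<Rightarrow> 'y::finite \<Rightarrow> real) set" where
  "receiver_policies = {\<beta>. (\<forall>xh y. 0 \<le> \<beta> xh y \<and> \<beta> xh y \<le> 1) \<and>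
                          (\<forall>y. (\<Sum>xh\<in>UNIV. \<beta> xh y) = 1)}"

definition xi :: "('x::finite \<Rightarrow> 'x \<Rightarrow> 'w::finite \<Rightarrow> real) \<Rightarrow> ('x \<Rightarrow> 'x \<Rightarrow> real)
    \<Rightarrow> ('y::finite \<Rightarrow> 'x \<Rightarrow> 'w \<Rightarrow> real) \<Rightarrow> ('x \<Rightarrow> 'y \<Rightarrow> real) \<Rightarrow> real" where
  "xi p d \<alpha> \<beta> = (\<Sum>x\<in>UNIV. \<Sum>xh\<in>UNIV. \<Sum>y\<in>UNIV. \<Sum>z\<in>UNIV. \<Sum>w\<in>UNIV.
      d x xh * \<beta> xh y * \<alpha> y z w * p x z w)"

definition P_yw :: "('x::finite \<Rightarrow> 'x \<Rightarrow> 'w::finite \<Rightarrow> real)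
    \<Rightarrow> ('y::finite \<Rightarrow> 'x \<Rightarrow> 'w \<Rightarrow> real) \<Rightarrow> 'y \<Rightarrow> 'w \<Rightarrow> real" where
  "P_yw p \<alpha> y w = (\<Sum>z\<in>UNIV. \<Sum>x\<in>UNIV. \<alpha> y z w * p x z w)"

definition P_y :: "('x::finite \<Rightarrow> 'x \<Rightarrow> 'w::finite \<Rightarrow> real)
    \<Rightarrow> ('y::finite \<Rightarrow> 'x \<Rightarrow> 'w \<Rightarrow> real) \<Rightarrow> 'y \<Rightarrow> real" where
  "P_y p \<alpha> y = (\<Sum>w\<in>UNIV. P_yw p \<alpha> y w)"

definition P_w :: "('x::finite \<Rightarrow> 'x \<Rightarrow> 'w::finite \<Rightarrow> real) \<Rightarrow> 'w \<Rightarrow> real" where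
  "P_w p w = (\<Sum>z\<in>UNIV. \<Sum>x\<in>UNIV. p x z w)"

text \<open>Mutual information I(Y;W) with the convention 0 log 0 = 0 (natural logarithm).\<close>
definition zeta :: "('x::finite \<Rightarrow> 'x \<Rightarrow> 'w::finite \<Rightarrow> real)
    \<Rightarrow> ('y::finite \<Rightarrow> 'x \<Rightarrow> 'w \<Rightarrow> real) \<Rightarrow> real" where
  "zeta p \<alpha> = (\<Sum>y\<in>UNIV. \<Sum>w\<in>UNIV.
      (if P_yw p \<alpha> y w = 0 then 0
       else P_yw p \<alpha> y w * ln (P_yw p \<alpha> y w / (P_y p \<alpha> y * P_w p w))))"

definition sender_cost :: "('x::finite \<Rightarrow> 'x \<Rightarrow> 'w::finite \<Rightarrow> real) \<Rightarrow> ('x \<Rightarrow> 'x \<Rightarrow> real) \<Rightarrow> real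
    \<Rightarrow> ('y::finite \<Rightarrow> 'x \<Rightarrow> 'w \<Rightarrow> real) \<Rightarrow> ('x \<Rightarrow> 'y \<Rightarrow> real) \<Rightarrow> real" where
  "sender_cost p d \<rho> \<alpha> \<beta> = xi p d \<alpha> \<beta> + \<rho> * zeta p \<alpha>"

definition receiver_cost :: "('x::finite \<Rightarrow> 'x \<Rightarrow> 'w::finite \<Rightarrow> real) \<Rightarrow> ('x \<Rightarrow> 'x \<Rightarrow> real)
    \<Rightarrow> ('y::finite \<Rightarrow> 'x \<Rightarrow> 'w \<Rightarrow> real) \<Rightarrow> ('x \<Rightarrow> 'y \<Rightarrow> real) \<Rightarrow> real" where
  "receiver_cost p d \<alpha> \<beta> = xi p d \<alpha> \<beta>"

definition eps_nash :: "('x::finite \<Rightarrow> 'x \<Rightarrow> 'w::finite \<Rightarrow> real) \<Rightarrow> ('x \<Rightarrow> 'x \<Rightarrow> real) \<Rightarrow> real \<Rightarrow> real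
    \<Rightarrow> (('y::finite \<Rightarrow> 'x \<Rightarrow> 'w \<Rightarrow> real) \<times> ('x \<Rightarrow> 'y \<Rightarrow> real)) set" where
  "eps_nash p d \<rho> \<epsilon> = {(\<alpha>, \<beta>). \<alpha> \<in> sender_policies \<and> \<beta> \<in> receiver_policies \<and>
      (\<forall>\<alpha>'\<in>sender_policies. sender_cost p d \<rho> \<alpha> \<beta> \<le> sender_cost p d \<rho> \<alpha>' \<beta> + \<epsilon>) \<and>
      (\<forall>\<beta>'\<in>receiver_policies. receiver_cost p d \<alpha> \<beta> \<le> receiver_cost p d \<alpha> \<beta>' + \<epsilon>)}"

end

theory Submission imports Defs begin
lemma term_bound:
  fixes a b c :: real
  assumes "0 \<le> a" "a \<le> b" "a \<le> c" "b \<le> 1" "c \<le> 1"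
  shows "\<bar>if a = 0 then 0 else a * ln (a / (b * c))\<bar> \<le> 1"
proof (cases "a = 0")
  case False
  hence a: "a > 0" using assms by auto
  hence b: "b > 0" and c: "c > 0" using assms by auto
  define t where "t = a / (b * c)"
  have t: "t > 0" using a b c by (simp add: t_def)
  have "ln t \<le> t - 1" using ln_le_minus_one[OF t] .
  hence "a * ln t \<le> a * t" using a by (simp add: mult_left_mono)
  also have "a * t = (a * a) / (b * c)" by (simp add: t_def)
  also have "\<dots> \<le> 1"
  proof -
    have "a * a \<le> b * c" using assms a by (intro mult_mono) auto
    thus ?thesis using b c by simp
  qed
  finally have up: "a * ln t \<le> 1" .
  have "ln (1/t) \<le> 1/t - 1" using ln_le_minus_one t by simp
  hence "ln t \<ge> 1 - 1/t" using t by (simp add: ln_div)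
  hence "a * ln t \<ge> a * (1 - 1/t)" using a by (simp add: mult_left_mono)
  moreover have "a * (1 - 1/t) = a - b * c" using a b c by (simp add: t_def field_simps)
  moreover have "b * c \<le> 1" using assms b c by (metis less_eq_real_def mult_le_one)
  ultimately have "a * ln t \<ge> -1" using a by linarith
  with up False show ?thesis by (simp add: t_def)
qed simp

lemma zeta_bound:
  fixes p :: "'x::finite \<Rightarrow> 'x \<Rightarrow> 'w::finite \<Rightarrow> real" and \<alpha> :: "'y::finite \<Rightarrow> 'x \<Rightarrow> 'w \<Rightarrow> real"
  assumes pn: "\<forall>x z w. 0 \<le> p x z w"
    and ps: "(\<Sum>x\<in>UNIV. \<Sum>z\<in>UNIV. \<Sum>w\<in>UNIV. p x z w) = 1"
    and a: "\<alpha> \<in> sender_policies"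
  shows "\<bar>zeta p \<alpha>\<bar> \<le> real (card (UNIV::'y set)) * real (card (UNIV::'w set))"
proof -
  have a0: "\<And>y z w. 0 \<le> \<alpha> y z w" and a1: "\<And>y z w. \<alpha> y z w \<le> 1"
    using a by (auto simp: sender_policies_def)
  have Pw0: "\<And>w. 0 \<le> P_w p w" unfolding P_w_def using pn by (intro sum_nonneg) auto
  have sumPw: "(\<Sum>w\<in>UNIV. P_w p w) = 1"
  proof -
    have "(\<Sum>w\<in>UNIV. P_w p w) = (\<Sum>x\<in>UNIV. \<Sum>z\<in>UNIV. \<Sum>w\<in>UNIV. p x z w)"
    proof -
      have "(\<Sum>w\<in>UNIV. P_w p w) = (\<Sum>w\<in>UNIV. \<Sum>x\<in>UNIV. \<Sum>z\<in>UNIV. p x z w)"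
        unfolding P_w_def by (rule sum.cong[OF refl], rule sum.swap)
      also have "\<dots> = (\<Sum>x\<in>UNIV. \<Sum>w\<in>UNIV. \<Sum>z\<in>UNIV. p x z w)" by (rule sum.swap)
      also have "\<dots> = (\<Sum>x\<in>UNIV. \<Sum>z\<in>UNIV. \<Sum>w\<in>UNIV. p x z w)"
        by (rule sum.cong[OF refl], rule sum.swap)
      finally show ?thesis .
    qed
    thus ?thesis using ps by simp
  qed
  have Pw1: "\<And>w. P_w p w \<le> 1"
  proof -
    fix w
    have "P_w p w \<le> (\<Sum>w\<in>UNIV. P_w p w)"
      by (rule member_le_sum) (auto simp: Pw0)
    thus "P_w p w \<le> 1" using sumPw by simp
  qed
  have Pyw0: "\<And>y w. 0 \<le> P_yw p \<alpha> y w" unfolding P_yw_def using pn a0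
    by (intro sum_nonneg) auto
  have PywPw: "\<And>y w. P_yw p \<alpha> y w \<le> P_w p w" unfolding P_yw_def P_w_def
    using pn a0 a1 by (intro sum_mono) (simp add: mult_left_le_one_le)
  have PywPy: "\<And>y w. P_yw p \<alpha> y w \<le> P_y p \<alpha> y" unfolding P_y_def
    by (rule member_le_sum) (auto simp: Pyw0)
  have Py1: "\<And>y. P_y p \<alpha> y \<le> 1"
  proof -
    fix y
    have "P_y p \<alpha> y \<le> (\<Sum>w\<in>UNIV. P_w p w)" unfolding P_y_def by (intro sum_mono PywPw)
    thus "P_y p \<alpha> y \<le> 1" using sumPw by simp
  qed
  have "\<bar>zeta p \<alpha>\<bar> \<le> (\<Sum>y\<in>(UNIV::'y set). \<Sum>w\<in>(UNIV::'w set). (1::real))"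
    unfolding zeta_def
    apply (rule order_trans[OF sum_abs])
    apply (rule sum_mono)
    apply (rule order_trans[OF sum_abs])
    apply (rule sum_mono)
    apply (rule term_bound)
    using Pyw0 PywPy PywPw Py1 Pw1 by auto
  thus ?thesis by simp
qed

theorem mainTheorem5:
  fixes p :: "'x::finite \<Rightarrow> 'x \<Rightarrow> 'w::finite \<Rightarrow> real"
    and d :: "'x \<Rightarrow> 'x \<Rightarrow> real"
    and \<rho> :: real
    and \<alpha>s :: "nat \<Rightarrow> ('y::finite \<Rightarrow> 'x \<Rightarrow> 'w \<Rightarrow> real)"
    and \<beta>s :: "nat \<Rightarrow> ('x \<Rightarrow> 'y \<Rightarrow> real)"
  assumes p_nonneg: "\<forall>x z w. 0 \<le> p x z w"
    and p_sum: "(\<Sum>x\<in>UNIV. \<Sum>z\<in>UNIV. \<Sum>w\<in>UNIV. p x z w) = 1"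
    and d_nonneg: "\<forall>x xh. 0 \<le> d x xh"
    and init: "\<alpha>s 0 \<in> sender_policies" "\<beta>s 0 \<in> receiver_policies"
    and even_step: "\<And>k. k \<ge> 1 \<Longrightarrow> even k \<Longrightarrow>
        \<alpha>s k \<in> sender_policies \<and>
        (\<forall>\<alpha>\<in>sender_policies. sender_cost p d \<rho> (\<alpha>s k) (\<beta>s (k - 1)) \<le> sender_cost p d \<rho> \<alpha> (\<beta>s (k - 1))) \<and>
        \<beta>s k = \<beta>s (k - 1)"
    and odd_step: "\<And>k. odd k \<Longrightarrow>
        \<beta>s k \<in> receiver_policies \<and>
        (\<forall>\<beta>\<in>receiver_policies. receiver_cost p d (\<alpha>s (k - 1)) (\<beta>s k) \<le> receiver_cost p d (\<alpha>s (k - 1)) \<beta>) \<and>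
        \<alpha>s k = \<alpha>s (k - 1)"
  shows "\<forall>\<epsilon>>0. \<exists>K::nat. \<forall>k\<ge>K. (\<alpha>s k, \<beta>s k) \<in> eps_nash p d \<rho> \<epsilon>"
proof -
  have pol: "\<alpha>s k \<in> sender_policies \<and> \<beta>s k \<in> receiver_policies" for k
  proof (induction k)
    case 0 then show ?case using init by simp
  next
    case (Suc k)
    show ?case
    proof (cases "even (Suc k)")
      case True
      then show ?thesis using even_step[of "Suc k"] Suc by auto
    next
      case False
      then show ?thesis using odd_step[of "Suc k"] Suc by auto
    qed
  qed
  define \<Phi> where "\<Phi> k = sender_cost p d \<rho> (\<alpha>s k) (\<beta>s k)" for k
  have rc: "receiver_cost p d a b = sender_cost p d \<rho> a b - \<rho> * zeta p a" for a b
    by (simp add: receiver_cost_def sender_cost_def)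
  have xi0: "0 \<le> xi p d a b" if "a \<in> sender_policies" "b \<in> receiver_policies" for a b
    using that p_nonneg d_nonneg unfolding xi_def sender_policies_def receiver_policies_def
    by (intro sum_nonneg mult_nonneg_nonneg) auto
  define C where "C = real (card (UNIV::'y set)) * real (card (UNIV::'w set))"
  have lb: "- (\<bar>\<rho>\<bar> * C) \<le> \<Phi> k" for k
  proof -
    have z: "\<bar>zeta p (\<alpha>s k)\<bar> \<le> C" unfolding C_def
      using zeta_bound[OF p_nonneg p_sum] pol by blast
    have "\<bar>\<rho> * zeta p (\<alpha>s k)\<bar> \<le> \<bar>\<rho>\<bar> * C"
      unfolding abs_mult by (rule mult_left_mono[OF z]) simp
    moreover have "0 \<le> xi p d (\<alpha>s k) (\<beta>s k)" using xi0 pol by blast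
    ultimately show ?thesis unfolding \<Phi>_def sender_cost_def by linarith
  qed
  have step: "\<Phi> (Suc k) \<le> \<Phi> k" for k
  proof (cases "even (Suc k)")
    case True
    then show ?thesis using even_step[of "Suc k"] pol[of k] unfolding \<Phi>_def by auto
  next
    case False
    then have "receiver_cost p d (\<alpha>s k) (\<beta>s (Suc k)) \<le> receiver_cost p d (\<alpha>s k) (\<beta>s k)"
      and "\<alpha>s (Suc k) = \<alpha>s k"
      using odd_step[of "Suc k"] pol[of k] by auto
    then show ?thesis unfolding \<Phi>_def rc by simp
  qed
  have dec: "decseq \<Phi>" using step by (simp add: decseq_SucI)
  obtain L where L: "\<Phi> \<longlonglongrightarrow> L" using decseq_convergent[OF dec] lb by blast
  have gap: "(\<lambda>k. \<Phi> k - \<Phi> (Suc k)) \<longlonglongrightarrow> 0"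
    using tendsto_diff[OF L LIMSEQ_Suc[OF L]] by simp
  show ?thesis
  proof (intro allI impI)
    fix \<epsilon> :: real assume e: "\<epsilon> > 0"
    from gap e obtain N where N: "\<And>k. k \<ge> N \<Longrightarrow> \<bar>\<Phi> k - \<Phi> (Suc k)\<bar> < \<epsilon>"
      unfolding LIMSEQ_def dist_real_def by auto
    show "\<exists>K. \<forall>k\<ge>K. (\<alpha>s k, \<beta>s k) \<in> eps_nash p d \<rho> \<epsilon>"
    proof (intro exI allI impI)
      fix k assume k: "Suc N \<le> k"
      have g: "\<Phi> k \<le> \<Phi> (Suc k) + \<epsilon>" using N[of k] k by auto
      have S: "sender_cost p d \<rho> (\<alpha>s k) (\<beta>s k) \<le> sender_cost p d \<rho> a (\<beta>s k) + \<epsilon>"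
        if a: "a \<in> sender_policies" for a
      proof (cases "even k")
        case True
        with k have "sender_cost p d \<rho> (\<alpha>s k) (\<beta>s (k-1)) \<le> sender_cost p d \<rho> a (\<beta>s (k-1))"
          and "\<beta>s k = \<beta>s (k - 1)" using even_step[of k] a by auto
        then show ?thesis using e by simp
      next
        case False
        then have "even (Suc k)" by simp
        then have "sender_cost p d \<rho> (\<alpha>s (Suc k)) (\<beta>s k) \<le> sender_cost p d \<rho> a (\<beta>s k)"
          and "\<beta>s (Suc k) = \<beta>s k" using even_step[of "Suc k"] a by auto
        then show ?thesis using g unfolding \<Phi>_def by simp
      qed
      have R: "receiver_cost p d (\<alpha>s k) (\<beta>s k) \<le> receiver_cost p d (\<alpha>s k) b + \<epsilon>"
        if b: "b \<in> receiver_policies" for b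
      proof (cases "even k")
        case False
        then have "receiver_cost p d (\<alpha>s (k-1)) (\<beta>s k) \<le> receiver_cost p d (\<alpha>s (k-1)) b"
          and "\<alpha>s k = \<alpha>s (k - 1)" using odd_step[of k] b by auto
        then show ?thesis using e by simp
      next
        case True
        then have "odd (Suc k)" by simp
        then have "receiver_cost p d (\<alpha>s k) (\<beta>s (Suc k)) \<le> receiver_cost p d (\<alpha>s k) b"
          and "\<alpha>s (Suc k) = \<alpha>s k" using odd_step[of "Suc k"] b by auto
        then show ?thesis using g unfolding \<Phi>_def rc by simp
      qed
      show "(\<alpha>s k, \<beta>s k) \<in> eps_nash p d \<rho> \<epsilon>"
        unfolding eps_nash_def using pol[of k] S R by auto
    qed
  qed
qed
end
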